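(* Let $\mathsf{A}_e,\mathsf{A}_h\subset GL_2(\mathbb{R})$ be such that (1) $\mathsf{A}_h$ is nonempty, compact, and has a strongly invariant multicone $\mathcal{C}$, (2) $\mathsf{A}_e$ is strongly conformal and $A\mathcal{C}=\mathcal{C}$ for all $A\in\mathsf{A}_e$. Then the semigroup $\mathcal{S}(\mathsf{A}_e\cup\mathsf{A}_h)$ generated by $\mathsf{A}_e\cup\mathsf{A}_h$ is almost multiplicative.
   Context: $\|\cdot\|$ is the operator norm. A semigroup $\mathcal{S}\subset GL_2(\mathbb{R})$ is almost multiplicative if there is $\kappa>0$ with $\|AB\|\ge\kappa\|A\|\|B\|$ for all $A,B\in\mathcal{S}$. A set is strongly conformal if there is a single invertible $M$ with $|\det A|^{-1/2}MAM^{-1}\in O(2)$ for all $A$ in the set. $\mathbb{RP}^1$ is the real projective line; a multicone is a proper subset of $\mathbb{RP}^1$ that is a finite union of closed projective intervals; it is strongly invariant for a set $\mathsf{B}$ if $A\mathcal{C}\subset\mathcal{C}^o$ (interior) for all $A\in\mathsf{B}$. *)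

theory Defs
  imports "HOL-Analysis.Analysis"
begin

type_synonym mat2 = "real^2^2"

text \<open>Operator norm of a 2x2 real matrix (as a linear map on the Euclidean plane).\<close>
definition opnorm :: "mat2 \<Rightarrow> real" where
  "opnorm A = onorm (\<lambda>x. A *v x)"

text \<open>GL_2(R).\<close>
definition GL2 :: "mat2 set" where
  "GL2 = {A. invertible A}"

text \<open>Semigroup generated by a set of matrices (all finite nonempty products).\<close>
inductive_set semigroup_gen :: "mat2 set \<Rightarrow> mat2 set" for B :: "mat2 set" where
  gen: "A \<in> B \<Longrightarrow> A \<in> semigroup_gen B"
| mult: "A \<in> semigroup_gen B \<Longrightarrow> C \<in> semigroup_gen B \<Longrightarrow> A ** C \<in> semigroup_gen B"

definition almost_multiplicative :: "mat2 set \<Rightarrow> bool" where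
  "almost_multiplicative S \<longleftrightarrow>
     (\<exists>\<kappa>>0. \<forall>A\<in>S. \<forall>B\<in>S. opnorm (A ** B) \<ge> \<kappa> * opnorm A * opnorm B)"

definition strongly_conformal :: "mat2 set \<Rightarrow> bool" where
  "strongly_conformal B \<longleftrightarrow>
     (\<exists>M::mat2. invertible M \<and>
        (\<forall>A\<in>B. orthogonal_matrix ((1 / sqrt \<bar>det A\<bar>) *\<^sub>R (M ** A ** matrix_inv M))))"

text \<open>Subsets of the real projective line RP^1 are represented by their cones:
  sets of nonzero vectors in R^2 closed under multiplication by nonzero scalars.
  The closed projective interval with (distinct) endpoints [u], [v] is the set of
  lines through the segment from u to v (u, v linearly independent).\<close>
definition proj_interval :: "real^2 \<Rightarrow> real^2 \<Rightarrow> (real^2) set" where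
  "proj_interval u v = {t *\<^sub>R w | t w. t \<noteq> 0 \<and> w \<in> closed_segment u v}"

definition all_lines :: "(real^2) set" where
  "all_lines = UNIV - {0}"

definition multicone :: "(real^2) set \<Rightarrow> bool" where
  "multicone C \<longleftrightarrow>
     (\<exists>I. finite I \<and> I \<noteq> {} \<and>
        (\<forall>(u, v)\<in>I. \<not> collinear {0, u, v}) \<and>
        C = (\<Union>(u, v)\<in>I. proj_interval u v)) \<and>
     C \<subset> all_lines"

text \<open>Interior in RP^1 of a cone corresponds to the interior of the cone in R^2.\<close>
definition strongly_invariant :: "mat2 set \<Rightarrow> (real^2) set \<Rightarrow> bool" where
  "strongly_invariant B C \<longleftrightarrow> (\<forall>A\<in>B. (\<lambda>x. A *v x) ` C \<subseteq> interior C)"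

end

theory Submission
  imports Defs
begin

lemma mc_scale:
  assumes "multicone C" "x \<in> C" "t \<noteq> 0"
  shows "t *\<^sub>R x \<in> C"
proof -
  obtain I where I: "C = (\<Union>(u, v)\<in>I. proj_interval u v)"
    using assms(1) unfolding multicone_def by blast
  from assms(2) obtain u v where uv: "(u,v) \<in> I" "x \<in> proj_interval u v"
    unfolding I by blast
  then obtain s w where "s \<noteq> 0" "w \<in> closed_segment u v" "x = s *\<^sub>R w"
    unfolding proj_interval_def by blast
  then have "t *\<^sub>R x \<in> proj_interval u v"
    unfolding proj_interval_def using assms(3) by (auto intro!: exI[of _ "t * s"])
  then show ?thesis using uv(1) unfolding I by blast
qed

lemma mc_zero: "multicone C \<Longrightarrow> 0 \<notin> C"
  unfolding multicone_def all_lines_def by blast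

lemma mc_compact:
  assumes "multicone C"
  shows "compact (C \<inter> sphere 0 1)"
proof -
  obtain I where fin: "finite I" and I: "C = (\<Union>(u, v)\<in>I. proj_interval u v)"
    using assms(1) unfolding multicone_def by blast
  have z: "0 \<notin> C" using mc_zero[OF assms] .
  have eq: "proj_interval u v \<inter> sphere 0 1 =
      (\<lambda>w. inverse (norm w) *\<^sub>R w) ` closed_segment u v \<union> (\<lambda>w. - (inverse (norm w) *\<^sub>R w)) ` closed_segment u v"
    if "(u,v) \<in> I" for u v
  proof -
    have s0: "0 \<notin> closed_segment u v"
    proof
      assume "0 \<in> closed_segment u v"
      then have "(1::real) *\<^sub>R 0 \<in> proj_interval u v" unfolding proj_interval_def
        by (intro CollectI exI[of _ "1::real"] exI[of _ "0::real^2"]) simp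
      then show False using z that unfolding I by auto
    qed
    show ?thesis
    proof (rule set_eqI, rule iffI)
      fix x assume "x \<in> proj_interval u v \<inter> sphere 0 1"
      then obtain t w where tw: "t \<noteq> 0" "w \<in> closed_segment u v" "x = t *\<^sub>R w" "norm x = 1"
        unfolding proj_interval_def by auto
      then have "w \<noteq> 0" using s0 by auto
      have "\<bar>t\<bar> * norm w = 1" using tw by simp
      then have "t = inverse (norm w) \<or> t = - inverse (norm w)"
        using \<open>w \<noteq> 0\<close> by (cases "t \<ge> 0") (auto simp: field_simps)
      then show "x \<in> (\<lambda>w. inverse (norm w) *\<^sub>R w) ` closed_segment u v \<union> (\<lambda>w. - (inverse (norm w) *\<^sub>R w)) ` closed_segment u v"
        using tw by auto
    next
      fix x assume x: "x \<in> (\<lambda>w. inverse (norm w) *\<^sub>R w) ` closed_segment u v \<union> (\<lambda>w. - (inverse (norm w) *\<^sub>R w)) ` closed_segment u v"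
      then obtain w where w: "w \<in> closed_segment u v" "x = inverse (norm w) *\<^sub>R w \<or> x = (- inverse (norm w)) *\<^sub>R w"
        by auto
      then have "w \<noteq> 0" using s0 by auto
      then have "x \<in> proj_interval u v"
        using w unfolding proj_interval_def
        by (elim disjE; intro CollectI exI[of _ "if x = inverse (norm w) *\<^sub>R w then inverse (norm w) else - inverse (norm w)"] exI[of _ w]) auto
      moreover have "norm x = 1" using w \<open>w \<noteq> 0\<close> by auto
      ultimately show "x \<in> proj_interval u v \<inter> sphere 0 1" by simp
    qed
  qed
  have "C \<inter> sphere 0 1 = (\<Union>(u, v)\<in>I. proj_interval u v \<inter> sphere 0 1)"
    unfolding I by auto
  also have "compact \<dots>"
  proof (rule compact_UN[OF fin])
    fix p assume p: "p \<in> I"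
    obtain u v where puv: "p = (u,v)" by fastforce
    have s0: "0 \<notin> closed_segment u v"
    proof
      assume "0 \<in> closed_segment u v"
      then have "(1::real) *\<^sub>R 0 \<in> proj_interval u v" unfolding proj_interval_def
        by (intro CollectI exI[of _ "1::real"] exI[of _ "0::real^2"]) simp
      then show False using z p puv unfolding I by auto
    qed
    have c: "continuous_on (closed_segment u v) (\<lambda>w. inverse (norm w) *\<^sub>R w)"
      using s0 by (intro continuous_intros) auto
    have c2: "continuous_on (closed_segment u v) (\<lambda>w. - (inverse (norm w) *\<^sub>R w))"
      using s0 by (intro continuous_intros) auto
    show "compact ((\<lambda>(u, v). proj_interval u v \<inter> sphere 0 1) p)"
      using eq[of u v] p puv compact_continuous_image[OF c] compact_continuous_image[OF c2]
      by (auto intro!: compact_Un)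
  qed
  finally show ?thesis .
qed

lemma mc_unit:
  assumes "multicone C"
  shows "\<exists>w\<in>C. norm w = 1"
proof -
  obtain I where ne: "I \<noteq> {}" and I: "C = (\<Union>(u, v)\<in>I. proj_interval u v)"
    using assms(1) unfolding multicone_def by blast
  obtain u v where uv: "(u,v) \<in> I" using ne by auto
  have "(1::real) *\<^sub>R u \<in> proj_interval u v" unfolding proj_interval_def
    by (intro CollectI exI[of _ "1::real"] exI[of _ u]) simp
  then have u: "u \<in> C" using uv unfolding I by auto
  then have "u \<noteq> 0" using mc_zero[OF assms] by auto
  then show ?thesis using mc_scale[OF assms u, of "inverse (norm u)"] by (auto intro!: bexI)
qed

lemma parallel2:
  fixes x z :: "real^2"
  assumes "x \<noteq> 0" "(\<chi> i. if i = 1 then - (z$2) else z$1) \<bullet> x = 0"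
  shows "z = ((z \<bullet> x) / (x \<bullet> x)) *\<^sub>R x"
proof -
  have xx: "x \<bullet> x \<noteq> 0" using assms(1) by simp
  have e: "- (z$2) * x$1 + z$1 * x$2 = 0" using assms(2) by (simp add: inner_vec_def sum_2)
  have xx2: "x \<bullet> x = x$1 * x$1 + x$2 * x$2" by (simp add: inner_vec_def sum_2)
  have zx: "z \<bullet> x = z$1 * x$1 + z$2 * x$2" by (simp add: inner_vec_def sum_2)
  have "z$1 * (x \<bullet> x) = (z \<bullet> x) * x$1" unfolding xx2 zx using e
    by (simp add: algebra_simps)
  moreover have "z$2 * (x \<bullet> x) = (z \<bullet> x) * x$2" unfolding xx2 zx using e
    by (simp add: algebra_simps)
  ultimately show ?thesis using xx
    by (simp add: vec_eq_iff forall_2 field_simps)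
qed

lemma mc_functional:
  assumes "multicone C"
  shows "\<exists>n c1. c1 > 0 \<and> (\<forall>x\<in>C. norm x \<le> c1 * \<bar>n \<bullet> x\<bar>)"
proof -
  have "C \<subset> all_lines" using assms unfolding multicone_def by blast
  then obtain z where z: "z \<noteq> 0" "z \<notin> C" unfolding all_lines_def by blast
  define n :: "real^2" where "n = (\<chi> i. if i = 1 then - (z$2) else z$1)"
  have nz: "n \<bullet> x \<noteq> 0" if "x \<in> C" for x
  proof
    assume h: "n \<bullet> x = 0"
    have x0: "x \<noteq> 0" using that mc_zero[OF assms] by auto
    have zeq: "z = ((z \<bullet> x) / (x \<bullet> x)) *\<^sub>R x" using parallel2[OF x0] h unfolding n_def by simp
    then have "(z \<bullet> x) / (x \<bullet> x) \<noteq> 0" using z(1) by auto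
    then have "z \<in> C" using mc_scale[OF assms that] zeq by metis
    then show False using z(2) by simp
  qed
  let ?K = "C \<inter> sphere 0 1"
  have K: "compact ?K" using mc_compact[OF assms] .
  have Kne: "?K \<noteq> {}" using mc_unit[OF assms] by auto
  have "continuous_on ?K (\<lambda>x. \<bar>n \<bullet> x\<bar>)" by (intro continuous_intros)
  then obtain x0 where x0: "x0 \<in> ?K" "\<forall>y\<in>?K. \<bar>n \<bullet> x0\<bar> \<le> \<bar>n \<bullet> y\<bar>"
    using continuous_attains_inf[OF K Kne] by blast
  define c0 where "c0 = \<bar>n \<bullet> x0\<bar>"
  have c0: "c0 > 0" using nz x0(1) unfolding c0_def by auto
  have "norm x \<le> (1/c0) * \<bar>n \<bullet> x\<bar>" if x: "x \<in> C" for x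
  proof -
    have xn: "x \<noteq> 0" using x mc_zero[OF assms] by auto
    have "inverse (norm x) *\<^sub>R x \<in> ?K" using mc_scale[OF assms x, of "inverse (norm x)"] xn by auto
    then have "c0 \<le> \<bar>n \<bullet> (inverse (norm x) *\<^sub>R x)\<bar>" using x0(2) unfolding c0_def by blast
    also have "\<dots> = \<bar>n \<bullet> x\<bar> / norm x" using xn by (simp add: field_simps)
    finally have "c0 * norm x \<le> \<bar>n \<bullet> x\<bar>" using xn by (simp add: field_simps)
    then show ?thesis using c0 by (simp add: field_simps)
  qed
  then show ?thesis using c0 by (intro exI[of _ n] exI[of _ "1/c0"]) auto
qed

lemma inv_nz:
  fixes H :: mat2
  assumes "invertible H" "x \<noteq> 0" shows "H *v x \<noteq> 0"
  using inj_matrix_vector_mult[OF assms(1)] assms(2) by (metis injD matrix_vector_mult_0_right)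

lemma opnorm_mv: "norm (A *v x) \<le> opnorm A * norm x"
  unfolding opnorm_def by (rule onorm) simp

lemma opnorm_nonneg: "0 \<le> opnorm A"
  unfolding opnorm_def by (rule onorm_pos_le) simp

lemma opnorm_mult: "opnorm (A ** B) \<le> opnorm A * opnorm B"
proof -
  have "(\<lambda>x. (A ** B) *v x) = (\<lambda>x. A *v x) \<circ> (\<lambda>x. B *v x)"
    by (auto simp: matrix_vector_mul_assoc)
  then show ?thesis unfolding opnorm_def
    by (metis onorm_compose matrix_vector_mul_bounded_linear)
qed

lemma opnorm_le: "(\<And>x. norm (A *v x) \<le> b * norm x) \<Longrightarrow> opnorm A \<le> b"
  unfolding opnorm_def by (rule onorm_le)

lemma key_T:
  fixes T :: mat2
  assumes TC: "\<forall>x\<in>C. T *v x \<in> C" and nc: "\<forall>x\<in>C. norm x \<le> c1 * \<bar>n \<bullet> x\<bar>"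
    and c1: "c1 > 0" and z0: "0 \<notin> C" and bl: "ball y r \<subseteq> C" and r: "r > 0"
  shows "norm (T *v v) \<le> (2 * c1 * norm n / r) * norm (T *v y) * norm v"
proof (cases "v = 0")
  case True then show ?thesis by simp
next
  case False
  then have nv: "norm v > 0" by simp
  define \<rho> where "\<rho> = r / (2 * norm v)"
  have \<rho>: "\<rho> > 0" using r nv unfolding \<rho>_def by simp
  define \<alpha> where "\<alpha> = n \<bullet> (T *v y)"
  define \<beta> where "\<beta> = n \<bullet> (T *v v)"
  have lin: "T *v (y + s *\<^sub>R v) = T *v y + s *\<^sub>R (T *v v)" for s
    by (simp add: matrix_vector_right_distrib matrix_vector_mult_scaleR)
  have fs: "n \<bullet> (T *v (y + s *\<^sub>R v)) = \<alpha> + s * \<beta>" for s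
    unfolding lin \<alpha>_def \<beta>_def by (simp add: inner_add_right)
  have inC: "T *v (y + s *\<^sub>R v) \<in> C" if "\<bar>s\<bar> \<le> \<rho>" for s
  proof -
    have "dist y (y + s *\<^sub>R v) = \<bar>s\<bar> * norm v" by (simp add: dist_norm)
    also have "\<dots> \<le> \<rho> * norm v" using that nv by (simp add: mult_right_mono)
    also have "\<dots> < r" using nv r unfolding \<rho>_def by simp
    finally have "y + s *\<^sub>R v \<in> C" using bl by auto
    then show ?thesis using TC by blast
  qed
  have nzC: "n \<bullet> x \<noteq> 0" if "x \<in> C" for x
  proof
    assume "n \<bullet> x = 0"
    then have "norm x \<le> 0" using nc that by auto
    then have "x = 0" by simp
    then show False using z0 that by simp
  qed
  have nzf: "\<alpha> + s * \<beta> \<noteq> 0" if "\<bar>s\<bar> \<le> \<rho>" for s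
    using nzC[OF inC[OF that]] fs by simp
  have prod: "(\<alpha> + \<rho> * \<beta>) * (\<alpha> + (-\<rho>) * \<beta>) > 0"
  proof (rule ccontr)
    assume "\<not> ?thesis"
    then have h: "\<alpha> * \<alpha> \<le> (\<rho> * \<beta>) * (\<rho> * \<beta>)" by (simp add: algebra_simps)
    show False
    proof (cases "\<beta> = 0")
      case True
      then have "\<alpha> * \<alpha> \<le> 0" using h by simp
      then have "\<alpha> = 0" by (metis mult_le_0_iff order_antisym_conv zero_le_square)
      then show False using nzf[of 0] \<rho> by simp
    next
      case False
      have "\<bar>\<alpha>\<bar> \<le> \<bar>\<rho> * \<beta>\<bar>" using h by (metis abs_le_square_iff power2_eq_square)
      then have "\<bar>- \<alpha> / \<beta>\<bar> \<le> \<rho>" using False \<rho> by (simp add: abs_mult divide_le_eq)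
      from nzf[OF this] False show False by simp
    qed
  qed
  then have sum: "\<bar>\<alpha> + \<rho> * \<beta>\<bar> + \<bar>\<alpha> + (-\<rho>) * \<beta>\<bar> = 2 * \<bar>\<alpha>\<bar>"
    by (cases "\<alpha> + \<rho> * \<beta> \<ge> 0"; cases "\<alpha> + (-\<rho>) * \<beta> \<ge> 0")
       (auto simp: zero_less_mult_iff)
  have p: "norm (T *v (y + \<rho> *\<^sub>R v)) \<le> c1 * \<bar>\<alpha> + \<rho> * \<beta>\<bar>"
    using nc inC[of \<rho>] fs[of \<rho>] \<rho> by auto
  have q: "norm (T *v (y + (-\<rho>) *\<^sub>R v)) \<le> c1 * \<bar>\<alpha> + (-\<rho>) * \<beta>\<bar>"
    using nc inC[of "-\<rho>"] fs[of "-\<rho>"] \<rho> by auto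
  have d: "T *v (y + \<rho> *\<^sub>R v) - T *v (y + (-\<rho>) *\<^sub>R v) = \<rho> *\<^sub>R (T *v v) + \<rho> *\<^sub>R (T *v v)"
    unfolding lin by simp
  have co: "(1 / (2*\<rho>)) * (\<rho> + \<rho>) = 1" using \<rho> by simp
  have "T *v v = (1 / (2*\<rho>)) *\<^sub>R (T *v (y + \<rho> *\<^sub>R v) - T *v (y + (-\<rho>) *\<^sub>R v))"
    unfolding d by (simp only: scaleR_left_distrib[symmetric] scaleR_scaleR co scaleR_one)
  then have "norm (T *v v) \<le> (1 / (2*\<rho>)) * (norm (T *v (y + \<rho> *\<^sub>R v)) + norm (T *v (y + (-\<rho>) *\<^sub>R v)))"
    using \<rho> by (simp add: norm_triangle_ineq4 divide_right_mono)
  also have "\<dots> \<le> (1 / (2*\<rho>)) * (c1 * (2 * \<bar>\<alpha>\<bar>))"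
  proof -
    have "c1 * \<bar>\<alpha> + \<rho> * \<beta>\<bar> + c1 * \<bar>\<alpha> + (-\<rho>) * \<beta>\<bar> = c1 * (2 * \<bar>\<alpha>\<bar>)"
      using sum by (metis distrib_left)
    then have "norm (T *v (y + \<rho> *\<^sub>R v)) + norm (T *v (y + (-\<rho>) *\<^sub>R v)) \<le> c1 * (2 * \<bar>\<alpha>\<bar>)"
      using p q by linarith
    then show ?thesis using \<rho> by (intro mult_left_mono) auto
  qed
  also have "\<bar>\<alpha>\<bar> \<le> norm n * norm (T *v y)" unfolding \<alpha>_def by (rule Cauchy_Schwarz_ineq2)
  then have "(1 / (2*\<rho>)) * (c1 * (2 * \<bar>\<alpha>\<bar>)) \<le> (1 / (2*\<rho>)) * (c1 * (2 * (norm n * norm (T *v y))))"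
    using \<rho> c1 by (simp add: divide_right_mono)
  also have "\<dots> = (2 * c1 * norm n / r) * norm (T *v y) * norm v"
    using nv r unfolding \<rho>_def by (simp add: field_simps)
  finally show ?thesis .
qed

lemma mv_cont: "continuous_on S (\<lambda>p::(mat2 \<times> (real^2)). fst p *v snd p)"
proof -
  have "continuous_on UNIV (\<lambda>p::(mat2 \<times> (real^2)). fst p *v snd p)"
    unfolding matrix_vector_mult_def by (intro continuous_intros)
  then show ?thesis by (rule continuous_on_subset) simp
qed

lemma Ah_bounds:
  assumes "compact Ah" "Ah \<subseteq> GL2" "Ah \<noteq> {}"
  shows "\<exists>m>0. \<exists>Bd>0. \<forall>H\<in>Ah. (\<forall>x. m * norm x \<le> norm (H *v x)) \<and> opnorm H \<le> Bd"
proof -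
  let ?S = "Ah \<times> (sphere (0::real^2) 1)"
  have cS: "compact ?S" using assms(1) by (intro compact_Times) auto
  have "(axis 1 1 :: real^2) \<in> sphere 0 1" by simp
  then have neS: "?S \<noteq> {}" using assms(3) by blast
  have cf: "continuous_on ?S (\<lambda>p. norm (fst p *v snd p))"
    using mv_cont by (intro continuous_intros)
  obtain p0 where p0: "p0 \<in> ?S" "\<forall>q\<in>?S. norm (fst p0 *v snd p0) \<le> norm (fst q *v snd q)"
    using continuous_attains_inf[OF cS neS cf] by blast
  obtain p1 where p1: "p1 \<in> ?S" "\<forall>q\<in>?S. norm (fst q *v snd q) \<le> norm (fst p1 *v snd p1)"
    using continuous_attains_sup[OF cS neS cf] by blast
  define m where "m = norm (fst p0 *v snd p0)"
  define Bd where "Bd = norm (fst p1 *v snd p1) + 1"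
  have "fst p0 \<in> GL2" "snd p0 \<noteq> 0" using p0(1) assms(2) by auto
  then have m: "m > 0" unfolding m_def GL2_def using inv_nz by auto
  have Bd: "Bd > 0" unfolding Bd_def by (simp add: add_nonneg_pos)
  have "(\<forall>x. m * norm x \<le> norm (H *v x)) \<and> opnorm H \<le> Bd" if H: "H \<in> Ah" for H
  proof -
    have lo: "m * norm x \<le> norm (H *v x)" for x
    proof (cases "x = 0")
      case True then show ?thesis by simp
    next
      case False
      then have "(H, inverse (norm x) *\<^sub>R x) \<in> ?S" using H by simp
      then have "m \<le> norm (H *v (inverse (norm x) *\<^sub>R x))" using p0(2) unfolding m_def by force
      also have "\<dots> = norm (H *v x) / norm x" by (simp add: matrix_vector_mult_scaleR divide_inverse mult.commute)
      finally show ?thesis using False by (simp add: field_simps)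
    qed
    have hi: "norm (H *v x) \<le> Bd * norm x" for x
    proof (cases "x = 0")
      case True then show ?thesis by simp
    next
      case False
      then have "(H, inverse (norm x) *\<^sub>R x) \<in> ?S" using H by simp
      then have "norm (H *v (inverse (norm x) *\<^sub>R x)) \<le> norm (fst p1 *v snd p1)" using p1(2) by force
      then have "norm (H *v (inverse (norm x) *\<^sub>R x)) \<le> Bd" unfolding Bd_def by linarith
      also have "norm (H *v (inverse (norm x) *\<^sub>R x)) = norm (H *v x) / norm x" by (simp add: matrix_vector_mult_scaleR divide_inverse mult.commute)
      finally show ?thesis using False by (simp add: field_simps)
    qed
    show ?thesis using lo opnorm_le[OF hi] by blast
  qed
  then show ?thesis using m Bd by blast
qed

lemma interior_scale:
  assumes "multicone C" "z \<in> interior C" "t \<noteq> 0"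
  shows "t *\<^sub>R z \<in> interior C"
proof -
  obtain e where e: "e > 0" "ball z e \<subseteq> C" using assms(2) mem_interior by blast
  have "ball (t *\<^sub>R z) (\<bar>t\<bar> * e) \<subseteq> C"
  proof
    fix p assume "p \<in> ball (t *\<^sub>R z) (\<bar>t\<bar> * e)"
    then have "norm (t *\<^sub>R z - p) < \<bar>t\<bar> * e" by (simp add: dist_norm)
    moreover have "t *\<^sub>R z - p = t *\<^sub>R (z - inverse t *\<^sub>R p)" using assms(3) by (simp add: algebra_simps)
    ultimately have "\<bar>t\<bar> * norm (z - inverse t *\<^sub>R p) < \<bar>t\<bar> * e" by simp
    then have "norm (z - inverse t *\<^sub>R p) < e" using assms(3) by simp
    then have "inverse t *\<^sub>R p \<in> C" using e(2) by (auto simp: dist_norm)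
    from mc_scale[OF assms(1) this assms(3)] show "p \<in> C" using assms(3) by simp
  qed
  moreover have "\<bar>t\<bar> * e > 0" using e(1) assms(3) by simp
  ultimately show ?thesis by (auto simp: mem_interior)
qed

lemma Y_radius:
  assumes mc: "multicone C" and si: "strongly_invariant Ah C" and cA: "compact Ah" and GA: "Ah \<subseteq> GL2"
  shows "\<exists>r>0. \<forall>H\<in>Ah. \<forall>x\<in>C. ball (inverse (norm (H *v x)) *\<^sub>R (H *v x)) r \<subseteq> C"
proof -
  let ?S = "Ah \<times> (C \<inter> sphere 0 1)"
  let ?f = "\<lambda>p::(mat2 \<times> (real^2)). inverse (norm (fst p *v snd p)) *\<^sub>R (fst p *v snd p)"
  have z0: "0 \<notin> C" using mc_zero[OF mc] .
  have nz: "fst p *v snd p \<noteq> 0" if "p \<in> ?S" for p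
  proof -
    have "fst p \<in> Ah" "snd p \<in> C" using that by auto
    then have "invertible (fst p)" "snd p \<noteq> 0" using GA z0 unfolding GL2_def by auto
    then show ?thesis by (rule inv_nz)
  qed
  have cS: "compact ?S" using cA mc_compact[OF mc] by (intro compact_Times)
  have cf: "continuous_on ?S ?f"
  proof -
    have c1: "continuous_on ?S (\<lambda>p::(mat2 \<times> (real^2)). fst p *v snd p)" by (rule mv_cont)
    show ?thesis using c1 nz by (intro continuous_on_scaleR continuous_on_inverse continuous_on_norm) auto
  qed
  have cY: "compact (?f ` ?S)" by (rule compact_continuous_image[OF cf cS])
  have Ysub: "?f ` ?S \<subseteq> interior C"
  proof
    fix y assume "y \<in> ?f ` ?S"
    then obtain H x where Hx: "H \<in> Ah" "x \<in> C" "y = ?f (H, x)" "(H,x) \<in> ?S" by auto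
    have "H *v x \<in> interior C" using si Hx unfolding strongly_invariant_def by blast
    moreover have "inverse (norm (H *v x)) \<noteq> 0" using nz[OF Hx(4)] by simp
    ultimately show "y \<in> interior C" using interior_scale[OF mc] Hx(3) by simp
  qed
  obtain r where r: "r > 0" "(\<Union>y\<in>?f ` ?S. ball y r) \<subseteq> interior C"
    using compact_subset_open_imp_ball_epsilon_subset[OF cY open_interior Ysub] by blast
  have "ball (inverse (norm (H *v x)) *\<^sub>R (H *v x)) r \<subseteq> C" if H: "H \<in> Ah" and x: "x \<in> C" for H x
  proof -
    have x0: "x \<noteq> 0" using x z0 by auto
    define x' where "x' = inverse (norm x) *\<^sub>R x"
    have x'S: "(H, x') \<in> ?S" using H mc_scale[OF mc x, of "inverse (norm x)"] x0 unfolding x'_def by auto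
    have "H *v x' = inverse (norm x) *\<^sub>R (H *v x)" unfolding x'_def by (simp add: matrix_vector_mult_scaleR)
    then have "?f (H, x') = inverse (norm (H *v x)) *\<^sub>R (H *v x)" using x0 by simp
    moreover have "?f (H, x') \<in> ?f ` ?S" using x'S by (rule imageI)
    then have "ball (?f (H, x')) r \<subseteq> interior C" using r(2) UN_upper[of "?f (H, x')" "?f ` ?S" "\<lambda>y. ball y r"] by (rule_tac order_trans) auto
    ultimately have "ball (inverse (norm (H *v x)) *\<^sub>R (H *v x)) r \<subseteq> interior C" by simp
    then show ?thesis using interior_subset by blast
  qed
  then show ?thesis using r(1) by blast
qed

definition confm :: "mat2 \<Rightarrow> (real^2) set \<Rightarrow> mat2 \<Rightarrow> bool" where
  "confm M C E \<longleftrightarrow> (\<exists>r\<ge>0. \<forall>x. norm (M *v (E *v x)) = r * norm (M *v x)) \<and> (\<forall>x\<in>C. E *v x \<in> C)"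

lemma confm_mult:
  assumes "confm M C A" "confm M C B" shows "confm M C (A ** B)"
proof -
  obtain ra where ra: "ra \<ge> 0" "\<forall>x. norm (M *v (A *v x)) = ra * norm (M *v x)" "\<forall>x\<in>C. A *v x \<in> C"
    using assms(1) unfolding confm_def by blast
  obtain rb where rb: "rb \<ge> 0" "\<forall>x. norm (M *v (B *v x)) = rb * norm (M *v x)" "\<forall>x\<in>C. B *v x \<in> C"
    using assms(2) unfolding confm_def by blast
  have "norm (M *v ((A ** B) *v x)) = (ra * rb) * norm (M *v x)" for x
    using ra(2) rb(2) by (simp add: matrix_vector_mul_assoc[symmetric])
  moreover have "\<forall>x\<in>C. (A ** B) *v x \<in> C" using ra(3) rb(3) by (simp add: matrix_vector_mul_assoc[symmetric])
  ultimately show ?thesis unfolding confm_def using ra(1) rb(1) by (intro conjI exI[of _ "ra * rb"]) auto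
qed

lemma confm_Ae:
  assumes M: "invertible M" and A: "invertible A"
    and orth: "orthogonal_matrix ((1 / sqrt \<bar>det A\<bar>) *\<^sub>R (M ** A ** matrix_inv M))"
    and AC: "\<forall>x\<in>C. A *v x \<in> C"
  shows "confm M C A"
proof -
  define s where "s = sqrt \<bar>det A\<bar>"
  have s: "s > 0" using A unfolding s_def by (simp add: invertible_det_nz)
  have Mi: "matrix_inv M ** M = mat 1"
    using M unfolding invertible_def matrix_inv_def by (rule someI2_ex) auto
  let ?N = "(1 / s) *\<^sub>R (M ** A ** matrix_inv M)"
  have Nn: "norm (?N *v v) = norm v" for v
    using orth unfolding s_def
    by (metis orthogonal_transformation_matrix orthogonal_transformation_norm matrix_of_matrix_vector_mul matrix_vector_mul_linear)
  have "?N *v (M *v x) = (1 / s) *\<^sub>R (M *v (A *v x))" for x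
  proof -
    have "(M ** A ** matrix_inv M) *v (M *v x) = M *v (A *v ((matrix_inv M ** M) *v x))"
      by (simp add: matrix_vector_mul_assoc matrix_mul_assoc)
    then show ?thesis using Mi by (simp add: scaleR_matrix_vector_assoc[symmetric])
  qed
  then have "norm (M *v (A *v x)) = s * norm (M *v x)" for x
    using Nn[of "M *v x"] s by (simp add: field_simps)
  then show ?thesis unfolding confm_def using s AC by (intro conjI exI[of _ s]) auto
qed

lemma confm_bound:
  assumes M: "invertible M"
  shows "\<exists>ka>0. \<forall>E. confm M C E \<longrightarrow> (\<forall>x. ka * opnorm E * norm x \<le> norm (E *v x))"
proof -
  have Mi: "matrix_inv M ** M = mat 1"
    using M unfolding invertible_def matrix_inv_def by (rule someI2_ex) auto
  define bi where "bi = opnorm (matrix_inv M) + 1"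
  define b where "b = opnorm M + 1"
  have bi: "bi > 0" unfolding bi_def using opnorm_nonneg[of "matrix_inv M"] by linarith
  have b: "b > 0" unfolding b_def using opnorm_nonneg[of M] by linarith
  have lo: "norm x \<le> bi * norm (M *v x)" for x
  proof -
    have "norm x = norm (matrix_inv M *v (M *v x))" by (simp add: matrix_vector_mul_assoc Mi)
    also have "\<dots> \<le> opnorm (matrix_inv M) * norm (M *v x)" by (rule opnorm_mv)
    also have "\<dots> \<le> bi * norm (M *v x)" unfolding bi_def by (simp add: distrib_right)
    finally show ?thesis .
  qed
  have hi: "norm (M *v x) \<le> b * norm x" for x
  proof -
    have "norm (M *v x) \<le> opnorm M * norm x" by (rule opnorm_mv)
    also have "\<dots> \<le> b * norm x" unfolding b_def by (simp add: distrib_right)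
    finally show ?thesis .
  qed
  define ka where "ka = 1 / (b * bi) ^ 2"
  have ka: "ka > 0" unfolding ka_def using b bi by simp
  have "ka * opnorm E * norm x \<le> norm (E *v x)" if E: "confm M C E" for E x
  proof -
    obtain r where r: "r \<ge> 0" "\<forall>x. norm (M *v (E *v x)) = r * norm (M *v x)"
      using E unfolding confm_def by blast
    have "norm (E *v v) \<le> (bi * r * b) * norm v" for v
    proof -
      have "norm (E *v v) \<le> bi * norm (M *v (E *v v))" by (rule lo)
      also have "\<dots> = bi * r * norm (M *v v)" using r(2) by simp
      also have "\<dots> \<le> bi * r * (b * norm v)" using hi[of v] bi r(1) by (intro mult_left_mono) auto
      finally show ?thesis by (simp add: mult.assoc)
    qed
    then have opE: "opnorm E \<le> bi * r * b" by (rule opnorm_le)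
    have "norm (M *v (E *v x)) \<le> b * norm (E *v x)" by (rule hi)
    then have "r * norm (M *v x) \<le> b * norm (E *v x)" using r(2) by simp
    moreover have "r * norm x \<le> r * (bi * norm (M *v x))" using lo[of x] r(1) by (rule mult_left_mono)
    ultimately have "r * norm x \<le> bi * (b * norm (E *v x))" using bi
      by (smt (verit, ccfv_threshold) mult.left_commute mult_left_mono)
    then have key: "r * norm x / (bi * b) \<le> norm (E *v x)" using bi b by (simp add: field_simps)
    have "ka * opnorm E * norm x \<le> ka * (bi * r * b) * norm x"
      using opE ka by (intro mult_right_mono mult_left_mono) auto
    also have "\<dots> = r * norm x / (bi * b)" unfolding ka_def using b bi by (simp add: field_simps power2_eq_square)
    finally show ?thesis using key by linarith
  qed
  then show ?thesis using ka by blast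
qed

lemma decomp:
  assumes S: "S \<in> semigroup_gen (Ae \<union> Ah)"
    and Ae: "\<forall>A\<in>Ae. confm M C A" and Ah: "\<forall>H\<in>Ah. \<forall>x\<in>C. H *v x \<in> C"
  shows "(\<forall>x\<in>C. S *v x \<in> C) \<and> (confm M C S \<or>
           (\<exists>T H E. (\<forall>x\<in>C. T *v x \<in> C) \<and> H \<in> Ah \<and> confm M C E \<and> S = T ** H ** E))"
  using S
proof (induction rule: semigroup_gen.induct)
  case (gen A)
  show ?case
  proof (cases "A \<in> Ae")
    case True
    then show ?thesis using Ae unfolding confm_def by blast
  next
    case False
    then have H: "A \<in> Ah" using gen by blast
    have c1: "confm M C (mat 1)" unfolding confm_def by (intro conjI exI[of _ 1]) auto
    have "A = mat 1 ** A ** mat 1" by simp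
    then show ?thesis using H Ah c1 by (intro conjI disjI2) (blast, metis matrix_vector_mul_lid)
  qed
next
  case (mult A B)
  have pres: "\<forall>x\<in>C. (A ** B) *v x \<in> C" using mult.IH by (simp add: matrix_vector_mul_assoc[symmetric])
  from mult.IH(2) consider "confm M C B"
    | T H E where "\<forall>x\<in>C. T *v x \<in> C" "H \<in> Ah" "confm M C E" "B = T ** H ** E" by blast
  then show ?case
  proof cases
    case 1
    from mult.IH(1) consider "confm M C A"
      | T H E where "\<forall>x\<in>C. T *v x \<in> C" "H \<in> Ah" "confm M C E" "A = T ** H ** E" by blast
    then show ?thesis
    proof cases
      case 1
      then show ?thesis using \<open>confm M C B\<close> pres confm_mult by blast
    next
      case (2 T H E)
      have "A ** B = T ** H ** (E ** B)" using 2(4) by (simp add: matrix_mul_assoc)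
      then show ?thesis using 2 pres confm_mult[OF 2(3) \<open>confm M C B\<close>] by blast
    qed
  next
    case (2 T H E)
    have "A ** B = (A ** T) ** H ** E" using 2(4) by (simp add: matrix_mul_assoc)
    moreover have "\<forall>x\<in>C. (A ** T) *v x \<in> C" using 2(1) mult.IH(1) by (simp add: matrix_vector_mul_assoc[symmetric])
    ultimately show ?thesis using 2 pres by blast
  qed
qed

theorem proposition2p3:
  fixes Ae Ah :: "mat2 set" and C :: "(real^2) set"
  assumes "Ae \<subseteq> GL2" and "Ah \<subseteq> GL2"
    and "Ah \<noteq> {}" and "compact Ah"
    and "multicone C" and "strongly_invariant Ah C"
    and "strongly_conformal Ae"
    and "\<forall>A\<in>Ae. (\<lambda>x. A *v x) ` C = C"
  shows "almost_multiplicative (semigroup_gen (Ae \<union> Ah))"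
proof -
  note mc = assms(5)
  have z0: "0 \<notin> C" using mc_zero[OF mc] .
  obtain M :: mat2 where M: "invertible M"
    and orth: "\<forall>A\<in>Ae. orthogonal_matrix ((1 / sqrt \<bar>det A\<bar>) *\<^sub>R (M ** A ** matrix_inv M))"
    using assms(7) unfolding strongly_conformal_def by blast
  have AeC: "\<forall>A\<in>Ae. confm M C A"
  proof
    fix A assume A: "A \<in> Ae"
    have "invertible A" using A assms(1) unfolding GL2_def by auto
    moreover have "\<forall>x\<in>C. A *v x \<in> C" using assms(8) A by blast
    ultimately show "confm M C A" using confm_Ae[OF M] orth A by blast
  qed
  have AhC: "\<forall>H\<in>Ah. \<forall>x\<in>C. H *v x \<in> C"
    using assms(6) interior_subset unfolding strongly_invariant_def by blast
  obtain ka where ka: "ka > 0" "\<forall>E. confm M C E \<longrightarrow> (\<forall>x. ka * opnorm E * norm x \<le> norm (E *v x))"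
    using confm_bound[OF M] by blast
  obtain m Bd where m: "m > 0" and Bd: "Bd > 0"
    and mB: "\<forall>H\<in>Ah. (\<forall>x. m * norm x \<le> norm (H *v x)) \<and> opnorm H \<le> Bd"
    using Ah_bounds[OF assms(4,2,3)] by blast
  obtain n c1 where c1: "c1 > 0" and nc: "\<forall>x\<in>C. norm x \<le> c1 * \<bar>n \<bullet> x\<bar>"
    using mc_functional[OF mc] by blast
  obtain r where r: "r > 0" and rb: "\<forall>H\<in>Ah. \<forall>x\<in>C. ball (inverse (norm (H *v x)) *\<^sub>R (H *v x)) r \<subseteq> C"
    using Y_radius[OF mc assms(6,4,2)] by blast
  define K2 where "K2 = 2 * c1 * norm n / r + 1"
  have K2: "K2 > 0" unfolding K2_def using c1 r by (simp add: add_nonneg_pos)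
  define c2 where "c2 = ka * m / (K2 * Bd)"
  have c2: "c2 > 0" unfolding c2_def using ka m K2 Bd by simp
  define c where "c = min ka c2"
  have c: "c > 0" unfolding c_def using ka c2 by simp
  have key: "c * opnorm S * norm w \<le> norm (S *v w)" if S: "S \<in> semigroup_gen (Ae \<union> Ah)" and w: "w \<in> C" for S w
  proof -
    have nS: "0 \<le> opnorm S * norm w" using opnorm_nonneg by simp
    from decomp[OF S AeC AhC] consider "confm M C S"
      | T H E where "\<forall>x\<in>C. T *v x \<in> C" "H \<in> Ah" "confm M C E" "S = T ** H ** E" by blast
    then show ?thesis
    proof cases
      case 1
      then have "ka * opnorm S * norm w \<le> norm (S *v w)" using ka(2) by blast
      moreover have "c * (opnorm S * norm w) \<le> ka * (opnorm S * norm w)"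
        unfolding c_def using nS by (intro mult_right_mono) auto
      ultimately show ?thesis by (simp add: mult.assoc)
    next
      case (2 T H E)
      define x where "x = E *v w"
      have xC: "x \<in> C" using 2(3) w unfolding x_def confm_def by blast
      have x0: "x \<noteq> 0" using xC z0 by auto
      define y0 where "y0 = H *v x"
      have my0: "m * norm x \<le> norm y0" using mB 2(2) unfolding y0_def by blast
      have y00: "y0 \<noteq> 0" using my0 m x0
      proof -
        have "0 < m * norm x" using m x0 by simp
        then show ?thesis using my0 by auto
      qed
      define y where "y = inverse (norm y0) *\<^sub>R y0"
      have bly: "ball y r \<subseteq> C" using rb 2(2) xC unfolding y_def y0_def by blast
      have Tb: "norm (T *v v) \<le> K2 * norm (T *v y) * norm v" for v
      proof -
        have "norm (T *v v) \<le> (2 * c1 * norm n / r) * norm (T *v y) * norm v"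
          by (rule key_T[OF 2(1) nc c1 z0 bly r])
        also have "\<dots> \<le> K2 * norm (T *v y) * norm v" unfolding K2_def
          by (intro mult_right_mono) (auto simp: distrib_right)
        finally show ?thesis .
      qed
      have opT: "opnorm T \<le> K2 * norm (T *v y)"
        by (rule opnorm_le) (use Tb in auto)
      have Ty0: "T *v y0 = norm y0 *\<^sub>R (T *v y)"
        unfolding y_def using y00 by (simp add: matrix_vector_mult_scaleR)
      have Sw: "S *v w = T *v y0"
        unfolding 2(4) y0_def x_def by (simp add: matrix_vector_mul_assoc matrix_mul_assoc)
      have normSw: "norm (S *v w) = norm y0 * norm (T *v y)" unfolding Sw Ty0 by simp
      have opS: "opnorm S \<le> opnorm T * Bd * opnorm E"
      proof -
        have "opnorm S \<le> opnorm (T ** H) * opnorm E" unfolding 2(4) by (rule opnorm_mult)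
        also have "\<dots> \<le> (opnorm T * opnorm H) * opnorm E"
          by (intro mult_right_mono opnorm_mult opnorm_nonneg)
        also have "\<dots> \<le> (opnorm T * Bd) * opnorm E"
          using mB 2(2) by (intro mult_right_mono mult_left_mono opnorm_nonneg) auto
        finally show ?thesis .
      qed
      have kE: "ka * opnorm E * norm w \<le> norm x" unfolding x_def using ka(2) 2(3) by blast
      have "c2 * opnorm S * norm w \<le> c2 * (opnorm T * Bd * opnorm E) * norm w"
        using opS c2 by (intro mult_right_mono mult_left_mono) auto
      also have "\<dots> = (m / K2) * opnorm T * (ka * opnorm E * norm w)"
        unfolding c2_def using K2 Bd by (simp add: field_simps)
      also have "\<dots> \<le> (m / K2) * opnorm T * norm x"
        using kE m K2 opnorm_nonneg[of T] by (intro mult_left_mono) auto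
      also have "\<dots> \<le> (m / K2) * (K2 * norm (T *v y)) * norm x"
        using opT m K2 by (intro mult_right_mono mult_left_mono) auto
      also have "\<dots> = norm (T *v y) * (m * norm x)" using K2 by (simp add: field_simps)
      also have "\<dots> \<le> norm (T *v y) * norm y0" using my0 by (intro mult_left_mono) auto
      also have "\<dots> = norm (S *v w)" using normSw by simp
      finally have "c2 * opnorm S * norm w \<le> norm (S *v w)" .
      moreover have "c * (opnorm S * norm w) \<le> c2 * (opnorm S * norm w)"
        unfolding c_def using nS by (intro mult_right_mono) auto
      ultimately show ?thesis by (simp add: mult.assoc)
    qed
  qed
  obtain w where w: "w \<in> C" "norm w = 1" using mc_unit[OF mc] by blast
  have "opnorm (A ** B) \<ge> (c * c) * opnorm A * opnorm B"
    if A: "A \<in> semigroup_gen (Ae \<union> Ah)" and B: "B \<in> semigroup_gen (Ae \<union> Ah)" for A B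
  proof -
    have BwC: "B *v w \<in> C" using decomp[OF B AeC AhC] w(1) by blast
    have "(c * c) * opnorm A * opnorm B = c * opnorm A * (c * opnorm B * norm w)"
      using w(2) by simp
    also have "\<dots> \<le> c * opnorm A * norm (B *v w)"
      using key[OF B w(1)] c opnorm_nonneg[of A] by (intro mult_left_mono) auto
    also have "\<dots> \<le> norm (A *v (B *v w))" by (rule key[OF A BwC])
    also have "\<dots> = norm ((A ** B) *v w)" by (simp add: matrix_vector_mul_assoc)
    also have "\<dots> \<le> opnorm (A ** B) * norm w" by (rule opnorm_mv)
    also have "\<dots> = opnorm (A ** B)" using w(2) by simp
    finally show ?thesis .
  qed
  then show ?thesis unfolding almost_multiplicative_def using c
    by (intro exI[of _ "c * c"]) auto
qed

end
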